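(* Let $f,g:\mathbb{R}\to\mathbb{R}$ be $\mathcal{C}^2$ functions such that $f''(u)\ge c_0$ and $g''(u)\ge c_0$ for some $c_0>0$ and all $u\in\mathbb{R}$, and $f(u)>g(u)$ for all $u\in\mathbb{R}$. Let $u^-<u^+$ be real numbers (an upward jump) and $\theta^-,\theta^+\in\{0,1\}$, and let $$\lambda=\frac{[\theta^+f(u^+)+(1-\theta^+)g(u^+)]-[\theta^-f(u^-)+(1-\theta^-)g(u^-)]}{u^+-u^-}$$ be the Rankine–Hugoniot speed. Then the Lax admissibility conditions $$\theta^+f'(u^+)+(1-\theta^+)g'(u^+)\;\le\;\lambda\;\le\;\theta^-f'(u^-)+(1-\theta^-)g'(u^-)$$ are violated, i.e. at least one of these two inequalities fails.
   Context: This concerns jumps of weak solutions of the conservation law $u_t+[\theta(u_x)f(u)+(1-\theta(u_x))g(u)]_x=0$, where $\theta(s)=1$ for $s>0$ and $\theta(s)=0$ for $s<0$. A jump connects a left state $(u^-,\theta^-)$ to a right state $(u^+,\theta^+)$, traveling with the Rankine–Hugoniot speed $\lambda$ given in the claim. *)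

theory Defs
  imports "HOL-Analysis.Analysis"
begin

end

theory Submission
  imports Defs
begin

lemma convex_slope:
  fixes h h' h'' :: "real \<Rightarrow> real"
  assumes d1: "\<And>u. (h has_real_derivative h' u) (at u)"
    and d2: "\<And>u. (h' has_real_derivative h'' u) (at u)"
    and pos: "\<And>u. h'' u > 0"
    and ab: "a < b"
  shows "h' a < (h b - h a) / (b - a) \<and> (h b - h a) / (b - a) < h' b"
proof -
  have inc: "h' x < h' y" if "x < y" for x y
    using DERIV_pos_imp_increasing[OF that] d2 pos by blast
  obtain z where z: "a < z" "z < b" "h b - h a = (b - a) * h' z"
    using MVT2[OF ab] d1 by blast
  have "(h b - h a) / (b - a) = h' z" using z ab by simp
  thus ?thesis using inc[OF z(1)] inc[OF z(2)] by simp
qed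

theorem lemma2p1:
  fixes f f' f'' g g' g'' :: "real \<Rightarrow> real" and c0 um up thetam thetap :: real
  assumes f1: "\<And>u. (f has_real_derivative f' u) (at u)"
    and f2: "\<And>u. (f' has_real_derivative f'' u) (at u)"
    and f2c: "continuous_on UNIV f''"
    and g1: "\<And>u. (g has_real_derivative g' u) (at u)"
    and g2: "\<And>u. (g' has_real_derivative g'' u) (at u)"
    and g2c: "continuous_on UNIV g''"
    and c0: "c0 > 0"
    and fc: "\<And>u. f'' u \<ge> c0"
    and gc: "\<And>u. g'' u \<ge> c0"
    and fg: "\<And>u. f u > g u"
    and jump: "um < up"
    and thetam: "thetam \<in> {0, 1}"
    and thetap: "thetap \<in> {0, 1}"
  shows "let lam = ((thetap * f up + (1 - thetap) * g up) - (thetam * f um + (1 - thetam) * g um)) / (up - um)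
         in \<not> (thetap * f' up + (1 - thetap) * g' up \<le> lam \<and> lam \<le> thetam * f' um + (1 - thetam) * g' um)"
proof -
  have fp: "\<And>u. f'' u > 0" using fc c0 by (meson less_le_trans)
  have gp: "\<And>u. g'' u > 0" using gc c0 by (meson less_le_trans)
  note F = convex_slope[OF f1 f2 fp jump]
  note G = convex_slope[OF g1 g2 gp jump]
  have d: "up - um > 0" using jump by simp
  have A: "(g up - f um) / (up - um) < (g up - g um) / (up - um)"
    using fg[of um] d by (simp add: divide_strict_right_mono)
  have B: "(f up - g um) / (up - um) > (g up - g um) / (up - um)"
    using fg[of up] d by (simp add: divide_strict_right_mono)
  show ?thesis
    using thetam thetap F G A B by (auto simp: Let_def)
qed

end
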